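(* For every instance \(\mathcal{I}\) of 3-SAT, the graph \(G(\mathcal{I})\) constructed below is weakly chordal.
   Context: A graph is weakly chordal if neither it nor its complement contains an induced cycle of length at least 5. Let \(\mathcal{I}\) have variables \(x_1,\dots,x_k\) and clauses \(C_1,\dots,C_l\), each a disjunction of three literals. \(G(\mathcal{I})\) has vertices: literal vertices \(X=\{x_1,\dots,x_k,\overline{x_1},\dots,\overline{x_k}\}\), clause vertices \(c_1,\dots,c_l\), and six vertices \(r,p,q,a,b,t\). Edges: any two vertices of \(X\) are adjacent except the pairs \(x_j\overline{x_j}\); the clause vertices are pairwise nonadjacent; \(c_i\) is adjacent to every vertex of \(X\) except the three literal vertices of the literals of \(C_i\); each of \(r,p,q,a\) is adjacent to all literal vertices and all clause vertices; \(b\) is adjacent to all literal vertices; additionally the edges \(ab,ap,aq,bq,br,bt,pr,qr,qt\); no other edges. *)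

theory Defs
  imports Main
begin

definition induced_cycle :: "'a set \<Rightarrow> ('a \<Rightarrow> 'a \<Rightarrow> bool) \<Rightarrow> 'a list \<Rightarrow> bool" where
  "induced_cycle V E cs \<longleftrightarrow>
     length cs \<ge> 3 \<and> distinct cs \<and> set cs \<subseteq> V \<and>
     (\<forall>i<length cs. \<forall>j<length cs. i \<noteq> j \<longrightarrow>
        (E (cs!i) (cs!j) \<longleftrightarrow> (j = Suc i mod length cs \<or> i = Suc j mod length cs)))"

definition complement_adj :: "('a \<Rightarrow> 'a \<Rightarrow> bool) \<Rightarrow> 'a \<Rightarrow> 'a \<Rightarrow> bool" where
  "complement_adj E u v \<longleftrightarrow> u \<noteq> v \<and> \<not> E u v"

definition weakly_chordal :: "'a set \<Rightarrow> ('a \<Rightarrow> 'a \<Rightarrow> bool) \<Rightarrow> bool" where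
  "weakly_chordal V E \<longleftrightarrow>
     (\<forall>cs. induced_cycle V E cs \<longrightarrow> length cs < 5) \<and>
     (\<forall>cs. induced_cycle V (complement_adj E) cs \<longrightarrow> length cs < 5)"

text \<open>A literal is a pair (j, b): variable x_j if b = True, its negation if b = False.\<close>
type_synonym literal = "nat \<times> bool"

definition sat3_instance :: "nat \<Rightarrow> literal set list \<Rightarrow> bool" where
  "sat3_instance k C \<longleftrightarrow> (\<forall>c\<in>set C. card c = 3 \<and> (\<forall>(j, b)\<in>c. j < k))"

datatype vertex = Lit nat bool | Cl nat | R | P | Q | A | B | T

definition G_verts :: "nat \<Rightarrow> literal set list \<Rightarrow> vertex set" where
  "G_verts k C = {Lit j b | j b. j < k} \<union> {Cl i | i. i < length C} \<union> {R, P, Q, A, B, T}"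

fun G_base :: "literal set list \<Rightarrow> vertex \<Rightarrow> vertex \<Rightarrow> bool" where
  "G_base C (Lit j b) (Lit j' b') = (j \<noteq> j')"
| "G_base C (Cl i) (Lit j b) = ((j, b) \<notin> C ! i)"
| "G_base C R (Lit j b) = True"
| "G_base C P (Lit j b) = True"
| "G_base C Q (Lit j b) = True"
| "G_base C A (Lit j b) = True"
| "G_base C B (Lit j b) = True"
| "G_base C R (Cl i) = True"
| "G_base C P (Cl i) = True"
| "G_base C Q (Cl i) = True"
| "G_base C A (Cl i) = True"
| "G_base C A B = True"
| "G_base C A P = True"
| "G_base C A Q = True"
| "G_base C B Q = True"
| "G_base C B R = True"
| "G_base C B T = True"
| "G_base C P R = True"
| "G_base C Q R = True"
| "G_base C Q T = True"
| "G_base C _ _ = False"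

definition G_adj :: "literal set list \<Rightarrow> vertex \<Rightarrow> vertex \<Rightarrow> bool" where
  "G_adj C u v \<longleftrightarrow> u \<noteq> v \<and> (G_base C u v \<or> G_base C v u)"

end

theory Submission
  imports Defs
begin

lemma cyc_all:
  assumes "induced_cycle V E cs"
  shows "\<forall>i<length cs. \<forall>j<length cs. i \<noteq> j \<longrightarrow>
        (E (cs!i) (cs!j) \<longleftrightarrow> (j = Suc i mod length cs \<or> i = Suc j mod length cs))"
  using assms unfolding induced_cycle_def by (elim conjE)

lemma cyc_rel:
  assumes ic: "induced_cycle V E cs" and nd: "\<not> length cs dvd d"
  shows "E (cs!(i mod length cs)) (cs!((i+d) mod length cs)) \<longleftrightarrow>
         (length cs dvd (d - 1) \<or> length cs dvd (d+1))"
    "E (cs!((i+d) mod length cs)) (cs!(i mod length cs)) \<longleftrightarrow>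
         (length cs dvd (d - 1) \<or> length cs dvd (d+1))"
proof -
  let ?n = "length cs"
  have n3: "?n \<ge> 3" using ic unfolding induced_cycle_def by (elim conjE)
  have d0: "d \<ge> 1" using nd by (cases d) simp_all
  let ?a = "i mod ?n" and ?b = "(i+d) mod ?n"
  have a: "?a < ?n" using n3 by (intro mod_less_divisor) linarith
  have b: "?b < ?n" using n3 by (intro mod_less_divisor) linarith
  have "(?b = ?a) \<longleftrightarrow> ?n dvd (i + d - i)" using mod_eq_dvd_iff_nat[of i "i+d" ?n] by simp
  then have neq: "?a \<noteq> ?b" using nd by simp
  have 1: "(?b = Suc ?a mod ?n) \<longleftrightarrow> ?n dvd (d - 1)"
  proof -
    have "Suc ?a mod ?n = (i+1) mod ?n" by (simp add: mod_Suc_eq)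
    moreover have "((i+d) mod ?n = (i+1) mod ?n) \<longleftrightarrow> ?n dvd (i+d - (i+1))"
      using mod_eq_dvd_iff_nat[of "i+1" "i+d" ?n] d0 by simp
    moreover have "i+d - (i+1) = d - 1" by simp
    ultimately show ?thesis by simp
  qed
  have 2: "(?a = Suc ?b mod ?n) \<longleftrightarrow> ?n dvd (d + 1)"
  proof -
    have "Suc ?b mod ?n = (i+d+1) mod ?n" by (simp add: mod_Suc_eq)
    moreover have "((i+d+1) mod ?n = i mod ?n) \<longleftrightarrow> ?n dvd (i+d+1 - i)"
      using mod_eq_dvd_iff_nat[of "i" "i+d+1" ?n] by simp
    moreover have "i+d+1 - i = d + 1" by simp
    ultimately show ?thesis by (simp only: eq_commute[of "i mod ?n"])
  qed
  note all = cyc_all[OF ic]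
  have "E (cs!?a) (cs!?b) \<longleftrightarrow> (?b = Suc ?a mod ?n \<or> ?a = Suc ?b mod ?n)"
    using all a b neq by simp
  then show "E (cs!?a) (cs!?b) \<longleftrightarrow> (?n dvd (d - 1) \<or> ?n dvd (d+1))" using 1 2 by simp
  have "E (cs!?b) (cs!?a) \<longleftrightarrow> (?a = Suc ?b mod ?n \<or> ?b = Suc ?a mod ?n)"
    using all a b neq by simp
  then show "E (cs!?b) (cs!?a) \<longleftrightarrow> (?n dvd (d - 1) \<or> ?n dvd (d+1))" using 1 2 by blast
qed

lemma cyc_neq:
  assumes ic: "induced_cycle V E cs" and nd: "\<not> length cs dvd d"
  shows "cs!(i mod length cs) \<noteq> cs!((i+d) mod length cs)"
proof -
  let ?n = "length cs"
  have n3: "?n \<ge> 3" using ic unfolding induced_cycle_def by (elim conjE)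
  have "((i+d) mod ?n = i mod ?n) \<longleftrightarrow> ?n dvd (i + d - i)" using mod_eq_dvd_iff_nat[of i "i+d" ?n] by simp
  then have neq: "i mod ?n \<noteq> (i+d) mod ?n" using nd by simp
  moreover have "distinct cs" using ic unfolding induced_cycle_def by (elim conjE)
  moreover have "i mod ?n < ?n" "(i+d) mod ?n < ?n" using n3 by (intro mod_less_divisor; linarith)+
  ultimately show ?thesis using nth_eq_iff_index_eq by metis
qed

lemma small_ndvd: "(5::nat) \<le> n \<Longrightarrow> 0 < d \<Longrightarrow> d < 5 \<Longrightarrow> \<not> n dvd d"
proof
  assume "5 \<le> n" "0 < d" "d < 5" "n dvd d"
  then have "n \<le> d" using dvd_imp_le by blast
  then show False using \<open>5 \<le> n\<close> \<open>d < 5\<close> by linarith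
qed

lemma window:
  assumes ic: "induced_cycle V E cs" and n5: "5 \<le> length cs"
  defines "c \<equiv> \<lambda>i. cs ! (i mod length cs)"
  shows "c i \<in> V" "E (c i) (c (i+1))" "E (c (i+1)) (c i)"
    "\<not> E (c i) (c (i+2))" "\<not> E (c (i+2)) (c i)"
    "\<not> E (c i) (c (i+3))" "\<not> E (c (i+3)) (c i)"
    "c i \<noteq> c (i+1)" "c i \<noteq> c (i+2)" "c i \<noteq> c (i+3)" "c i \<noteq> c (i+4)"
    "c (i + length cs) = c i"
proof -
  let ?n = "length cs"
  have d1: "\<not> ?n dvd 1" by (rule small_ndvd[OF n5]) simp_all
  have d2: "\<not> ?n dvd 2" by (rule small_ndvd[OF n5]) simp_all
  have d3: "\<not> ?n dvd 3" by (rule small_ndvd[OF n5]) simp_all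
  have d4: "\<not> ?n dvd 4" by (rule small_ndvd[OF n5]) simp_all
  have "i mod ?n < ?n" using n5 by (intro mod_less_divisor) linarith
  moreover have "set cs \<subseteq> V" using ic unfolding induced_cycle_def by (elim conjE)
  ultimately show "c i \<in> V" unfolding c_def using nth_mem by blast
  have r1: "E (c i) (c (i+1)) \<longleftrightarrow> (?n dvd 0 \<or> ?n dvd 2)" "E (c (i+1)) (c i) \<longleftrightarrow> (?n dvd 0 \<or> ?n dvd 2)"
    using cyc_rel[OF ic d1, of i] unfolding c_def by simp_all
  then show "E (c i) (c (i+1))" "E (c (i+1)) (c i)" by simp_all
  have r2: "E (c i) (c (i+2)) \<longleftrightarrow> (?n dvd 1 \<or> ?n dvd 3)" "E (c (i+2)) (c i) \<longleftrightarrow> (?n dvd 1 \<or> ?n dvd 3)"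
    using cyc_rel[OF ic d2, of i] unfolding c_def by simp_all
  then show "\<not> E (c i) (c (i+2))" "\<not> E (c (i+2)) (c i)" using d1 d3 by simp_all
  have r3: "E (c i) (c (i+3)) \<longleftrightarrow> (?n dvd 2 \<or> ?n dvd 4)" "E (c (i+3)) (c i) \<longleftrightarrow> (?n dvd 2 \<or> ?n dvd 4)"
    using cyc_rel[OF ic d3, of i] unfolding c_def by simp_all
  then show "\<not> E (c i) (c (i+3))" "\<not> E (c (i+3)) (c i)" using d2 d4 by simp_all
  show "c i \<noteq> c (i+1)" using cyc_neq[OF ic d1] unfolding c_def .
  show "c i \<noteq> c (i+2)" using cyc_neq[OF ic d2] unfolding c_def .
  show "c i \<noteq> c (i+3)" using cyc_neq[OF ic d3] unfolding c_def .
  show "c i \<noteq> c (i+4)" using cyc_neq[OF ic d4] unfolding c_def .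
  show "c (i + ?n) = c i" unfolding c_def by simp
qed

definition nnb :: "(vertex \<Rightarrow> vertex \<Rightarrow> bool) \<Rightarrow> vertex \<Rightarrow> vertex \<Rightarrow> vertex \<Rightarrow> bool" where
  "nnb E v x y \<longleftrightarrow> x \<noteq> y \<and> x \<noteq> v \<and> y \<noteq> v \<and> \<not> E v x \<and> \<not> E v y \<and> E x y"
definition nb :: "(vertex \<Rightarrow> vertex \<Rightarrow> bool) \<Rightarrow> vertex \<Rightarrow> vertex \<Rightarrow> vertex \<Rightarrow> bool" where
  "nb E v x y \<longleftrightarrow> x \<noteq> y \<and> x \<noteq> v \<and> y \<noteq> v \<and> E v x \<and> E v y \<and> \<not> E x y"

lemma exG:
  "\<not> nnb (G_adj C) A x y"
  "\<not> nnb (G_adj C) R x y"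
  "\<not> nnb (G_adj C) Q x y"
  "\<not> nb (G_adj C) T x y"
  "x \<noteq> Q \<Longrightarrow> y \<noteq> Q \<Longrightarrow> x \<noteq> T \<Longrightarrow> y \<noteq> T \<Longrightarrow> \<not> nnb (G_adj C) P x y"
  "x \<noteq> P \<Longrightarrow> y \<noteq> P \<Longrightarrow> \<not> nnb (G_adj C) B x y"
  by (cases x; cases y; simp add: G_adj_def nnb_def nb_def)+

lemma exN:
  "\<not> nb (complement_adj (G_adj C)) A x y"
  "\<not> nb (complement_adj (G_adj C)) R x y"
  "\<not> nnb (complement_adj (G_adj C)) T x y"
  "\<not> nb (complement_adj (G_adj C)) Q x y"
  "x \<noteq> Q \<Longrightarrow> y \<noteq> Q \<Longrightarrow> x \<noteq> T \<Longrightarrow> y \<noteq> T \<Longrightarrow> \<not> nb (complement_adj (G_adj C)) P x y"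
  "x \<noteq> P \<Longrightarrow> y \<noteq> P \<Longrightarrow> x \<noteq> T \<Longrightarrow> y \<noteq> T \<Longrightarrow> \<not> nb (complement_adj (G_adj C)) B x y"
  by (cases x; cases y; simp add: G_adj_def nnb_def nb_def complement_adj_def)+

lemma clG:
  assumes "G_adj C (Cl m) u" "G_adj C (Cl m) v" "\<not> G_adj C u v" "u \<noteq> v"
    "(\<exists>j b. u = Lit j b) \<or> (\<exists>m. u = Cl m)" "(\<exists>j b. v = Lit j b) \<or> (\<exists>m. v = Cl m)"
  shows "\<exists>j b. u = Lit j b \<and> v = Lit j (\<not> b)"
  using assms by (cases u; cases v; auto simp add: G_adj_def)

lemma litG: "\<not> G_adj C (Lit j b) (Lit j' b') \<Longrightarrow> Lit j b \<noteq> Lit j' b' \<Longrightarrow> j' = j \<and> b' = (\<not> b)"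
  by (auto simp: G_adj_def)

lemma clN: "complement_adj (G_adj C) (Cl m) (Cl m') \<longleftrightarrow> m \<noteq> m'"
  by (auto simp: G_adj_def complement_adj_def)

lemma litN:
  assumes "complement_adj (G_adj C) (Lit j b) u" "complement_adj (G_adj C) (Lit j b) v"
    "\<not> complement_adj (G_adj C) u v" "u \<noteq> v"
    "(\<exists>j b. u = Lit j b) \<or> (\<exists>m. u = Cl m)" "(\<exists>j b. v = Lit j b) \<or> (\<exists>m. v = Cl m)"
  shows "(\<exists>m. u = Cl m) \<noteq> (\<exists>m. v = Cl m)"
  using assms by (cases u; cases v; auto simp add: G_adj_def complement_adj_def)

lemma no_hole:
  assumes ic: "induced_cycle V (G_adj C) cs" and n5: "5 \<le> length cs"
  shows False
proof -
  define c where "c = (\<lambda>i. cs ! (i mod length cs))"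
  let ?G = "G_adj C"
  have cdef: "cs ! (i mod length cs) = c i" for i by (simp add: c_def)
  note w = window[OF ic n5, unfolded cdef]
  have sh: "c i = c (i + length cs - 1 + 1)" for i
  proof -
    have "i + length cs - 1 + 1 = i + length cs" using n5 by arith
    then show ?thesis using w(12)[of i] by simp
  qed
  have nbr: "\<exists>x y. nb ?G (c (i+1)) x y \<and> (\<exists>j. x = c j) \<and> (\<exists>j. y = c j)" for i
  proof -
    have e: "i+1+1 = i+2" by simp
    have f1: "?G (c (i+1)) (c (i+2))" using w(2)[of "i+1"] unfolding e .
    have f2: "c (i+2) \<noteq> c (i+1)" using w(8)[of "i+1"] unfolding e by (rule not_sym)
    have "nb ?G (c (i+1)) (c i) (c (i+2))"
      unfolding nb_def by (insert f1 f2 w(3)[of i] w(4)[of i] w(9)[of i] w(8)[of i], intro conjI; assumption)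
    then show ?thesis by - (intro exI conjI, assumption, rule refl, rule refl)
  qed
  have nnbr: "\<exists>x y. nnb ?G (c i) x y \<and> (\<exists>j. x = c (j+1)) \<and> (\<exists>j. y = c (j+1))" for i
  proof -
    have e: "i+2+1 = i+3" by simp
    have f1: "?G (c (i+2)) (c (i+3))" using w(2)[of "i+2"] unfolding e .
    have f2: "c (i+2) \<noteq> c (i+3)" using w(8)[of "i+2"] unfolding e .
    have e2: "i+1+1 = i+2" by simp
    have f3: "c (i+2) = c ((i+1)+1)" "c (i+3) = c ((i+2)+1)" unfolding e e2 by (rule refl)+
    have "nnb ?G (c i) (c (i+2)) (c (i+3))"
      unfolding nnb_def by (insert f1 f2 w(4)[of i] w(6)[of i] not_sym[OF w(9)[of i]] not_sym[OF w(10)[of i]], intro conjI; assumption)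
    then show ?thesis by - (intro exI conjI, assumption, rule f3(1), rule f3(2))
  qed
  have nA: "c i \<noteq> A" for i
  proof
    assume h: "c i = A"
    from nnbr[of i] obtain x y where "nnb ?G (c i) x y" by blast
    then show False using exG(1)[of C x y] h by simp
  qed
  have nR: "c i \<noteq> R" for i
  proof
    assume h: "c i = R"
    from nnbr[of i] obtain x y where "nnb ?G (c i) x y" by blast
    then show False using exG(2)[of C x y] h by simp
  qed
  have nQ: "c i \<noteq> Q" for i
  proof
    assume h: "c i = Q"
    from nnbr[of i] obtain x y where "nnb ?G (c i) x y" by blast
    then show False using exG(3)[of C x y] h by simp
  qed
  have nT: "c (i+1) \<noteq> T" for i
  proof
    assume h: "c (i+1) = T"
    from nbr[of i] obtain x y where "nb ?G (c (i+1)) x y" by blast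
    then show False using exG(4)[of C x y] h by simp
  qed
  have nP: "c i \<noteq> P" for i
  proof
    assume h: "c i = P"
    obtain x y where "nnb ?G (c i) x y" "x \<noteq> Q" "y \<noteq> Q" "x \<noteq> T" "y \<noteq> T"
      using nnbr[of i] nQ nT by blast
    then show False using exG(5)[of x y C] h by simp
  qed
  have nB: "c i \<noteq> B" for i
  proof
    assume h: "c i = B"
    obtain x y where "nnb ?G (c i) x y" "x \<noteq> P" "y \<noteq> P"
      using nnbr[of i] nP by blast
    then show False using exG(6)[of x y C] h by simp
  qed
  have nT': "c i \<noteq> T" for i using nT[of "i + length cs - 1"] sh[of i] by simp
  have LC: "(\<exists>j b. c i = Lit j b) \<or> (\<exists>m. c i = Cl m)" for i
    using nA[of i] nB[of i] nP[of i] nQ[of i] nR[of i] nT'[of i] by (cases "c i") simp_all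
  have claimG: "\<exists>j b. c i = Lit j b \<and> c (i+2) = Lit j (\<not>b)" if h: "c (i+1) = Cl m" for i m
  proof -
    have e: "i+1+1 = i+2" by simp
    have f1: "?G (c (i+1)) (c (i+2))" using w(2)[of "i+1"] unfolding e .
    show ?thesis using clG[OF _ _ w(4)[of i] w(9)[of i] LC[of i] LC[of "i+2"]] f1 w(3)[of i] h by simp
  qed
  show False
  proof (cases "\<exists>i m. c (i+1) = Cl m")
    case True
    then obtain i m where h: "c (i+1) = Cl m" by blast
    from claimG[OF h] obtain j b where cj: "c i = Lit j b" "c (i+2) = Lit j (\<not>b)" by blast
    have e: "i+2+1 = i+3" by simp
    have "\<exists>m'. c (i+2+1) = Cl m'"
    proof (rule ccontr)
      assume "\<not> ?thesis"
      then obtain j' b' where l: "c (i+3) = Lit j' b'" using LC[of "i+3"] unfolding e by blast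
      have g1: "\<not> G_adj C (Lit j b) (Lit j' b')" using w(6)[of i] unfolding cj l .
      have g2: "Lit j b \<noteq> Lit j' b'" using w(10)[of i] unfolding cj l .
      have "j' = j \<and> b' = (\<not> b)" using litG[OF g1 g2] .
      then show False using w(8)[of "i+2"] cj l unfolding e by simp
    qed
    then obtain m' where "c (i+2+1) = Cl m'" by blast
    from claimG[OF this] obtain j' b' where o1: "c (i+2) = Lit j' b'" and o2: "c (i+2+2) = Lit j' (\<not>b')" by blast
    have e4: "i+2+2 = i+4" by simp
    have o3: "c (i+4) = Lit j' (\<not>b')" using o2 unfolding e4 .
    have "j' = j \<and> b' = (\<not>b)" using o1 cj(2) by simp
    then have "c (i+4) = c i" using o3 cj(1) by simp
    then show False using w(11)[of i] by simp
  next
    case False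
    have allL: "\<exists>j b. c i = Lit j b" for i
    proof (rule ccontr)
      assume "\<not> ?thesis"
      then obtain m where "c i = Cl m" using LC[of i] by blast
      then have "c (i + length cs - 1 + 1) = Cl m" using sh[of i] by simp
      then show False using False by blast
    qed
    obtain j b where c0: "c 0 = Lit j b" using allL by blast
    obtain j2 b2 where c2': "c (0+2) = Lit j2 b2" using allL by blast
    obtain j3 b3 where c3': "c (0+3) = Lit j3 b3" using allL by blast
    have e: "(0::nat)+2+1 = 0+3" by simp
    have g1: "\<not> G_adj C (Lit j b) (Lit j2 b2)" using w(4)[of 0] unfolding c0 c2' .
    have g2: "Lit j b \<noteq> Lit j2 b2" using w(9)[of 0] unfolding c0 c2' .
    have g3: "\<not> G_adj C (Lit j b) (Lit j3 b3)" using w(6)[of 0] unfolding c0 c3' .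
    have g4: "Lit j b \<noteq> Lit j3 b3" using w(10)[of 0] unfolding c0 c3' .
    have g5: "Lit j2 b2 \<noteq> Lit j3 b3" using w(8)[of "0+2"] unfolding e c2' c3' .
    have "j2 = j \<and> b2 = (\<not> b)" using litG[OF g1 g2] .
    moreover have "j3 = j \<and> b3 = (\<not> b)" using litG[OF g3 g4] .
    ultimately show False using g5 by simp
  qed
qed

lemma no_antihole:
  assumes ic: "induced_cycle V (complement_adj (G_adj C)) cs" and n5: "5 \<le> length cs"
  shows False
proof -
  define c where "c = (\<lambda>i. cs ! (i mod length cs))"
  let ?G = "complement_adj (G_adj C)"
  have cdef: "cs ! (i mod length cs) = c i" for i by (simp add: c_def)
  note w = window[OF ic n5, unfolded cdef]
  have sh: "c i = c (i + length cs - 1 + 1)" for i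
  proof -
    have "i + length cs - 1 + 1 = i + length cs" using n5 by arith
    then show ?thesis using w(12)[of i] by simp
  qed
  have nbr0: "\<exists>x y. nb ?G (c (i+1)) x y \<and> (\<exists>j. x = c j) \<and> (\<exists>j. y = c j)" for i
  proof -
    have e: "i+1+1 = i+2" by simp
    have f1: "?G (c (i+1)) (c (i+2))" using w(2)[of "i+1"] unfolding e .
    have f2: "c (i+2) \<noteq> c (i+1)" using w(8)[of "i+1"] unfolding e by (rule not_sym)
    have "nb ?G (c (i+1)) (c i) (c (i+2))"
      unfolding nb_def by (insert f1 f2 w(3)[of i] w(4)[of i] w(9)[of i] w(8)[of i], intro conjI; assumption)
    then show ?thesis by - (intro exI conjI, assumption, rule refl, rule refl)
  qed
  have nbr: "\<exists>x y. nb ?G (c i) x y \<and> (\<exists>j. x = c j) \<and> (\<exists>j. y = c j)" for i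
    using nbr0[of "i + length cs - 1"] unfolding sh[of i, symmetric] .
  have nnbr: "\<exists>x y. nnb ?G (c i) x y" for i
  proof -
    have e: "i+2+1 = i+3" by simp
    have f1: "?G (c (i+2)) (c (i+3))" using w(2)[of "i+2"] unfolding e .
    have f2: "c (i+2) \<noteq> c (i+3)" using w(8)[of "i+2"] unfolding e .
    have "nnb ?G (c i) (c (i+2)) (c (i+3))"
      unfolding nnb_def by (insert f1 f2 w(4)[of i] w(6)[of i] not_sym[OF w(9)[of i]] not_sym[OF w(10)[of i]], intro conjI; assumption)
    then show ?thesis by - (intro exI conjI, assumption)
  qed
  have nA: "c i \<noteq> A" for i
  proof
    assume h: "c i = A"
    from nbr[of i] obtain x y where "nb ?G (c i) x y" by blast
    then show False using exN(1)[of C x y] h by simp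
  qed
  have nR: "c i \<noteq> R" for i
  proof
    assume h: "c i = R"
    from nbr[of i] obtain x y where "nb ?G (c i) x y" by blast
    then show False using exN(2)[of C x y] h by simp
  qed
  have nT: "c i \<noteq> T" for i
  proof
    assume h: "c i = T"
    from nnbr[of i] obtain x y where "nnb ?G (c i) x y" by blast
    then show False using exN(3)[of C x y] h by simp
  qed
  have nQ: "c i \<noteq> Q" for i
  proof
    assume h: "c i = Q"
    from nbr[of i] obtain x y where "nb ?G (c i) x y" by blast
    then show False using exN(4)[of C x y] h by simp
  qed
  have nP: "c i \<noteq> P" for i
  proof
    assume h: "c i = P"
    obtain x y where "nb ?G (c i) x y" "x \<noteq> Q" "y \<noteq> Q" "x \<noteq> T" "y \<noteq> T"
      using nbr[of i] nQ nT by blast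
    then show False using exN(5)[of x y C] h by simp
  qed
  have nB: "c i \<noteq> B" for i
  proof
    assume h: "c i = B"
    obtain x y where "nb ?G (c i) x y" "x \<noteq> P" "y \<noteq> P" "x \<noteq> T" "y \<noteq> T"
      using nbr[of i] nP nT by blast
    then show False using exN(6)[of x y C] h by simp
  qed
  have LC: "(\<exists>j b. c i = Lit j b) \<or> (\<exists>m. c i = Cl m)" for i
    using nA[of i] nB[of i] nP[of i] nQ[of i] nR[of i] nT[of i] by (cases "c i") simp_all
  define isCl where "isCl v = (\<exists>m. v = Cl m)" for v
  have clcl: "?G u v" if "isCl u" "isCl v" "u \<noteq> v" for u v
    using that clN by (auto simp: isCl_def)
  have claim: "isCl (c i) \<noteq> isCl (c (i+2))" if h: "c (i+1) = Lit j b" for i j b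
  proof -
    have e: "i+1+1 = i+2" by simp
    have f1: "?G (c (i+1)) (c (i+2))" using w(2)[of "i+1"] unfolding e .
    show ?thesis unfolding isCl_def
      using litN[OF _ _ w(4)[of i] w(9)[of i] LC[of i] LC[of "i+2"]] f1 w(3)[of i] h by simp
  qed
  have ex: "\<exists>p j b. c p = Lit j b"
  proof (rule ccontr)
    assume "\<not> ?thesis"
    then have "isCl (c i)" for i using LC[of i] by (auto simp: isCl_def)
    then show False using clcl w(4)[of 0] w(9)[of 0] by blast
  qed
  then obtain p j b where hp: "c p = Lit j b" by blast
  define i where "i = p + length cs - 2"
  have "i + 2 = p + length cs" using n5 unfolding i_def by arith
  then have ci2: "c (i+2) = Lit j b" using hp w(12)[of p] by simp
  have L: "\<exists>j b. c q = Lit j b" if "\<not> isCl (c q)" for q using LC[of q] that by (auto simp: isCl_def)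
  have cl3: "\<not> (isCl (c q) \<and> isCl (c (q+3)))" for q using clcl w(6)[of q] w(10)[of q] by blast
  have e1: "i+1+2 = i+3" "i+1+1 = i+2" "i+2+1 = i+3" "i+2+2 = i+4" "i+1+3 = i+4" by simp_all
  have c1: "isCl (c (i+1)) \<noteq> isCl (c (i+3))" using claim[of "i+1"] ci2 unfolding e1 by simp
  show False
  proof (cases "isCl (c (i+1))")
    case True
    then have "\<not> isCl (c (i+3))" using c1 by simp
    then obtain j' b' where "c (i+2+1) = Lit j' b'" using L unfolding e1 by blast
    from claim[OF this] have "isCl (c (i+4))" using ci2 unfolding e1 by (simp add: isCl_def)
    then show False using cl3[of "i+1"] True unfolding e1 by simp
  next
    case False
    then have "isCl (c (i+3))" using c1 by simp
    moreover obtain j' b' where "c (i+1) = Lit j' b'" using L False by blast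
    from claim[OF this] have "isCl (c i)" using ci2 by (simp add: isCl_def)
    ultimately show False using cl3[of i] by simp
  qed
qed

theorem lemma13:
  assumes "sat3_instance k C"
  shows "weakly_chordal (G_verts k C) (G_adj C)"
proof -
  have 1: "length cs < 5" if "induced_cycle (G_verts k C) (G_adj C) cs" for cs
    using no_hole[OF that] by (rule ccontr) simp
  have 2: "length cs < 5" if "induced_cycle (G_verts k C) (complement_adj (G_adj C)) cs" for cs
    using no_antihole[OF that] by (rule ccontr) simp
  show ?thesis unfolding weakly_chordal_def using 1 2 by blast
qed
end
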